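(* Let $n \ge 3$, let $x_1, \dots, x_n \in \mathbb{R}$ be pairwise distinct, and let $\theta \in \mathbb{H}$. Then $$q(\theta) = \overline{\,M_\theta^{-1}\!\left(\frac{1}{n}\sum_{j=1}^n M_\theta(x_j)\right)},$$ where $q(\theta) = \theta - n\,h(\theta)/h'(\theta)$ with $h(\theta) = \prod_{j=1}^n (x_j-\theta)$, and $M_\theta(\zeta) = \frac{\zeta-\theta}{\zeta-\overline{\theta}}$ with inverse $M_\theta^{-1}(\zeta) = \frac{\theta - \overline{\theta}\zeta}{1-\zeta}$.
   Context: $\mathbb{H} = \{\theta\in\mathbb{C}:\Im\theta>0\}$; $\overline{\cdot}$ denotes complex conjugation. For $\theta\in\mathbb{H}$, $M_\theta$ is a biholomorphic map from $\mathbb{H}$ onto the open unit disc. *)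

theory Defs
  imports "HOL-Analysis.Analysis"
begin

definition hpoly :: "nat \<Rightarrow> (nat \<Rightarrow> real) \<Rightarrow> complex \<Rightarrow> complex" where
  "hpoly n x \<theta> = (\<Prod>j=1..n. (complex_of_real (x j) - \<theta>))"

definition qmap :: "nat \<Rightarrow> (nat \<Rightarrow> real) \<Rightarrow> complex \<Rightarrow> complex" where
  "qmap n x \<theta> = \<theta> - of_nat n * hpoly n x \<theta> / deriv (hpoly n x) \<theta>"

definition Mob :: "complex \<Rightarrow> complex \<Rightarrow> complex" where
  "Mob \<theta> \<zeta> = (\<zeta> - \<theta>) / (\<zeta> - cnj \<theta>)"

definition Mob_inv :: "complex \<Rightarrow> complex \<Rightarrow> complex" where
  "Mob_inv \<theta> \<zeta> = (\<theta> - cnj \<theta> * \<zeta>) / (1 - \<zeta>)"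

end

theory Submission
  imports Defs
begin

theorem mainTheorem6:
  fixes n :: nat and x :: "nat \<Rightarrow> real" and \<theta> :: complex
  assumes "n \<ge> 3"
    and "inj_on x {1..n}"
    and "Im \<theta> > 0"
  shows "qmap n x \<theta> =
    cnj (Mob_inv \<theta> ((1 / of_nat n) * (\<Sum>j=1..n. Mob \<theta> (complex_of_real (x j)))))"
proof -
  have nz: "complex_of_real (x j) - \<theta> \<noteq> 0" for j
    using assms(3) by (metis Im_complex_of_real eq_iff_diff_eq_0 less_irrefl)
  have nzc: "complex_of_real (x j) - cnj \<theta> \<noteq> 0" for j
    using assms(3) by (metis Im_complex_of_real complex_cnj_complex_of_real complex_cnj_diff
        complex_cnj_zero_iff eq_iff_diff_eq_0 less_irrefl)
  define S where "S = (\<Sum>j=1..n. 1 / (complex_of_real (x j) - \<theta>))"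
  define T where "T = (\<Sum>j=1..n. 1 / (complex_of_real (x j) - cnj \<theta>))"
  have TS: "T = cnj S" unfolding S_def T_def by (simp add: cnj_sum)
  have ImS: "Im S > 0"
  proof -
    have "Im S = (\<Sum>j=1..n. Im (1 / (complex_of_real (x j) - \<theta>)))"
      unfolding S_def by (simp add: Im_sum)
    also have "\<dots> > 0"
    proof (rule sum_pos)
      show "finite {1..n}" by simp
      show "{1..n} \<noteq> {}" using assms(1) by simp
      fix j assume "j \<in> {1..n}"
      have "Im (1 / (complex_of_real (x j) - \<theta>)) = Im \<theta> / (cmod (complex_of_real (x j) - \<theta>))^2"
        by (simp add: Im_divide cmod_power2)
      also have "\<dots> > 0" using assms(3) nz[of j] by simp
      finally show "Im (1 / (complex_of_real (x j) - \<theta>)) > 0" .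
    qed
    finally show ?thesis .
  qed
  hence Snz: "S \<noteq> 0" by auto
  hence Tnz: "T \<noteq> 0" using TS by simp
  have hnz: "hpoly n x \<theta> \<noteq> 0" unfolding hpoly_def using nz by simp
  have "(hpoly n x has_field_derivative
          (hpoly n x \<theta> * (\<Sum>j\<in>{1..n}. (-1) / (complex_of_real (x j) - \<theta>)))) (at \<theta>)"
  proof -
    have "((\<lambda>u. \<Prod>j\<in>{1..n}. (\<lambda>j u. complex_of_real (x j) - u) j u) has_field_derivative
      ((\<Prod>j\<in>{1..n}. (\<lambda>j u. complex_of_real (x j) - u) j \<theta>) *
        (\<Sum>j\<in>{1..n}. (-1) / ((\<lambda>j u. complex_of_real (x j) - u) j \<theta>)))) (at \<theta>)"
      by (rule has_field_derivative_prod') (use nz in \<open>auto intro!: derivative_eq_intros\<close>)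
    thus ?thesis unfolding hpoly_def[abs_def] by simp
  qed
  hence "deriv (hpoly n x) \<theta> = - hpoly n x \<theta> * S"
    using DERIV_imp_deriv unfolding S_def by (fastforce simp: sum_negf)
  hence L: "qmap n x \<theta> = \<theta> + of_nat n / S"
    unfolding qmap_def using hnz by (simp add: field_simps)
  have M: "Mob \<theta> (complex_of_real (x j)) = 1 - (\<theta> - cnj \<theta>) * (1 / (complex_of_real (x j) - cnj \<theta>))" for j
    unfolding Mob_def using nzc[of j] by (simp add: field_simps)
  have avg: "(1 / of_nat n) * (\<Sum>j=1..n. Mob \<theta> (complex_of_real (x j))) = 1 - (\<theta> - cnj \<theta>) * T / of_nat n"
    unfolding M T_def using assms(1) by (simp add: sum_subtractf sum_distrib_left field_simps)
  have bnz: "\<theta> - cnj \<theta> \<noteq> 0"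
  proof
    assume "\<theta> - cnj \<theta> = 0"
    hence "Im (\<theta> - cnj \<theta>) = 0" by simp
    thus False using assms(3) by simp
  qed
  have "Mob_inv \<theta> (1 - (\<theta> - cnj \<theta>) * T / of_nat n) = cnj \<theta> + of_nat n / T"
    unfolding Mob_inv_def using Tnz bnz assms(1) by (simp add: field_simps)
  thus ?thesis unfolding L avg TS by simp
qed

end
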